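(* Let $d\ge 2$ and let $K\subset\mathbb{R}^d$ be a nondegenerate $d$-simplex with vertices $a_1,\dots,a_{d+1}$, barycentric coordinates $\lambda_1,\dots,\lambda_{d+1}$, and edge vectors $e_{ij}=a_j-a_i$. Let $$Z_K=\mathbb{P}_2(K)\oplus\operatorname{span}\{\lambda_i^2\lambda_j-\lambda_i\lambda_j^2:\ 1\le i<j\le d+1\},$$ $$\Sigma_K=\{p\mapsto p(a_i),\ p\mapsto (e_{ij}\cdot\nabla p)(a_i):\ 1\le i\le d+1,\ j\ne i\}.$$ Then $\Sigma_K$ is $Z_K$-unisolvent, i.e. every $p\in Z_K$ is uniquely determined by the values of the functionals in $\Sigma_K$. Moreover, the nodal basis functions $\phi_i$ (dual to $p(a_i)$) and $\phi_{ij}$ (dual to $(e_{ij}\cdot\nabla p)(a_i)$) are $$\phi_i=\lambda_i+\sum_{j\ne i}(\lambda_i^2\lambda_j-\lambda_i\lambda_j^2),\qquad \phi_{ij}=\tfrac12\bigl(\lambda_i\lambda_j+\lambda_i^2\lambda_j-\lambda_i\lambda_j^2\bigr).$$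
   Context: $\mathbb{P}_2(K)$ denotes polynomials of total degree at most $2$ on $K$. "Dual" means $\phi_i(a_k)=\delta_{ik}$, $(e_{kl}\cdot\nabla\phi_i)(a_k)=0$ for all $k\ne l$, and $\phi_{ij}(a_k)=0$, $(e_{kl}\cdot\nabla\phi_{ij})(a_k)=\delta_{ik}\delta_{jl}$. *)

theory Defs
  imports "HOL-Analysis.Analysis"
begin

definition P2 :: "(real^'n \<Rightarrow> real) set" where
  "P2 = {p. \<exists>(c::real) (b::'n \<Rightarrow> real) (A::'n \<Rightarrow> 'n \<Rightarrow> real).
            \<forall>x. p x = c + (\<Sum>k\<in>UNIV. b k * x$k) + (\<Sum>k\<in>UNIV. \<Sum>l\<in>UNIV. A k l * x$k * x$l)}"

definition cubic_pair :: "(nat \<Rightarrow> real^'n \<Rightarrow> real) \<Rightarrow> nat \<Rightarrow> nat \<Rightarrow> real^'n \<Rightarrow> real" where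
  "cubic_pair lam i j x = (lam i x)^2 * lam j x - lam i x * (lam j x)^2"

text \<open>Index pairs i<j among vertex indices 0..d.\<close>
definition pairs_lt :: "nat \<Rightarrow> (nat \<times> nat) set" where
  "pairs_lt d = {(i,j). i < j \<and> j \<le> d}"

definition cubic_span :: "nat \<Rightarrow> (nat \<Rightarrow> real^'n \<Rightarrow> real) \<Rightarrow> (real^'n \<Rightarrow> real) set" where
  "cubic_span d lam = {p. \<exists>c::nat \<Rightarrow> nat \<Rightarrow> real.
      \<forall>x. p x = (\<Sum>(i,j)\<in>pairs_lt d. c i j * cubic_pair lam i j x)}"

definition Zspace :: "nat \<Rightarrow> (nat \<Rightarrow> real^'n \<Rightarrow> real) \<Rightarrow> (real^'n \<Rightarrow> real) set" where
  "Zspace d lam = {p. \<exists>q\<in>P2. \<exists>r\<in>cubic_span d lam. \<forall>x. p x = q x + r x}"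

definition dirderiv :: "(real^'n \<Rightarrow> real) \<Rightarrow> real^'n \<Rightarrow> real^'n \<Rightarrow> real" where
  "dirderiv p x v = frechet_derivative p (at x) v"

end

theory Submission
  imports Defs
begin


definition Qf :: "nat \<Rightarrow> (nat \<Rightarrow> real^'n \<Rightarrow> real) \<Rightarrow> (nat \<Rightarrow> nat \<Rightarrow> real) \<Rightarrow> real^'n \<Rightarrow> real" where
  "Qf d lam B x = (\<Sum>i\<le>d. \<Sum>l\<le>d. B i l * lam i x * lam l x)"
definition Cf :: "nat \<Rightarrow> (nat \<Rightarrow> real^'n \<Rightarrow> real) \<Rightarrow> (nat \<Rightarrow> nat \<Rightarrow> real) \<Rightarrow> real^'n \<Rightarrow> real" where
  "Cf d lam C x = (\<Sum>i\<le>d. \<Sum>j\<le>d. C i j * cubic_pair lam i j x)"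
definition Fq :: "nat \<Rightarrow> (nat \<Rightarrow> real^'n \<Rightarrow> real) \<Rightarrow> (nat \<Rightarrow> nat \<Rightarrow> real) \<Rightarrow> (nat \<Rightarrow> nat \<Rightarrow> real) \<Rightarrow> real^'n \<Rightarrow> real" where
  "Fq d lam B C x = Qf d lam B x + Cf d lam C x"

lemma has_derivative_eq: "(f has_derivative f') F \<Longrightarrow> (\<And>v. f' v = g v) \<Longrightarrow> (f has_derivative g) F"
proof -
  assume "(f has_derivative f') F" "\<And>v. f' v = g v"
  moreover have "f' = g" using calculation(2) by (rule ext)
  ultimately show ?thesis by simp
qed

lemma Fq_diff: "Fq d lam (\<lambda>i j. B1 i j - B2 i j) (\<lambda>i j. C1 i j - C2 i j) x = Fq d lam B1 C1 x - Fq d lam B2 C2 x"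
  by (simp add: Fq_def Qf_def Cf_def algebra_simps sum_subtractf)

lemma P2_add: "p \<in> P2 \<Longrightarrow> q \<in> P2 \<Longrightarrow> (\<lambda>x. p x + q x) \<in> P2"
proof -
  assume "p \<in> P2" "q \<in> P2"
  then obtain c b A c' b' A' where
    p: "\<And>x. p x = c + (\<Sum>k\<in>UNIV. b k * x$k) + (\<Sum>k\<in>UNIV. \<Sum>l\<in>UNIV. A k l * x$k * x$l)" and
    q: "\<And>x. q x = c' + (\<Sum>k\<in>UNIV. b' k * x$k) + (\<Sum>k\<in>UNIV. \<Sum>l\<in>UNIV. A' k l * x$k * x$l)"
    unfolding P2_def by blast
  show ?thesis unfolding P2_def
    by (rule CollectI, rule exI[of _ "c + c'"], rule exI[of _ "\<lambda>k. b k + b' k"],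
        rule exI[of _ "\<lambda>k l. A k l + A' k l"]) (simp add: p q algebra_simps sum.distrib)
qed

lemma P2_scale: "p \<in> P2 \<Longrightarrow> (\<lambda>x. r * p x) \<in> P2"
proof -
  assume "p \<in> P2"
  then obtain c b A where
    p: "\<And>x. p x = c + (\<Sum>k\<in>UNIV. b k * x$k) + (\<Sum>k\<in>UNIV. \<Sum>l\<in>UNIV. A k l * x$k * x$l)"
    unfolding P2_def by blast
  show ?thesis unfolding P2_def
    by (rule CollectI, rule exI[of _ "r * c"], rule exI[of _ "\<lambda>k. r * b k"],
        rule exI[of _ "\<lambda>k l. r * A k l"]) (simp add: p algebra_simps sum_distrib_left)
qed

lemma P2_zero: "(\<lambda>x. 0) \<in> P2"
  unfolding P2_def
  by (rule CollectI, rule exI[of _ 0], rule exI[of _ "\<lambda>k. 0"], rule exI[of _ "\<lambda>k l. 0"]) simp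

lemma P2_sum: "finite S \<Longrightarrow> (\<And>i. i \<in> S \<Longrightarrow> f i \<in> P2) \<Longrightarrow> (\<lambda>x. \<Sum>i\<in>S. f i x) \<in> P2"
proof (induction S rule: finite_induct)
  case empty
  then show ?case using P2_zero by simp
next
  case (insert i S)
  then show ?case using P2_add[of "f i" "\<lambda>x. \<Sum>i\<in>S. f i x"] by simp
qed

lemma P2_prod:
  assumes p: "\<And>x. p x = c + (\<Sum>k\<in>UNIV. w k * x$k)" and q: "\<And>x. q x = c' + (\<Sum>k\<in>UNIV. w' k * x$k)"
  shows "(\<lambda>x. p x * q x) \<in> P2"
proof -
  have "p x * q x = c * c' + (\<Sum>k\<in>UNIV. (c * w' k + c' * w k) * x$k) + (\<Sum>k\<in>UNIV. \<Sum>l\<in>UNIV. (w k * w' l) * x$k * x$l)" for x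
  proof -
    have "p x * q x = c * c' + c * (\<Sum>k\<in>UNIV. w' k * x$k) + c' * (\<Sum>k\<in>UNIV. w k * x$k) + (\<Sum>k\<in>UNIV. w k * x$k) * (\<Sum>l\<in>UNIV. w' l * x$l)"
      by (simp add: p q algebra_simps)
    also have "(\<Sum>k\<in>UNIV. w k * x$k) * (\<Sum>l\<in>UNIV. w' l * x$l) = (\<Sum>k\<in>UNIV. \<Sum>l\<in>UNIV. (w k * w' l) * x$k * x$l)"
      by (simp add: sum_product algebra_simps)
    finally show ?thesis by (simp add: sum_distrib_left sum.distrib algebra_simps)
  qed
  then show ?thesis unfolding P2_def
    by (intro CollectI exI[of _ "c * c'"] exI[of _ "\<lambda>k. c * w' k + c' * w k"] exI[of _ "\<lambda>k l. w k * w' l"]) blast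
qed

lemma pairs_sum: "(\<Sum>(i,j)\<in>pairs_lt d. f i j) = (\<Sum>i\<le>d. \<Sum>j\<le>d. if i < j then f i j else (0::real))"
proof -
  have e: "pairs_lt d = {p \<in> {..d} \<times> {..d}. fst p < snd p}" unfolding pairs_lt_def by auto
  have "(\<Sum>i\<le>d. \<Sum>j\<le>d. if i < j then f i j else (0::real)) = (\<Sum>p\<in>{..d} \<times> {..d}. if fst p < snd p then f (fst p) (snd p) else 0)"
    by (simp add: sum.cartesian_product case_prod_beta)
  also have "\<dots> = (\<Sum>p\<in>pairs_lt d. f (fst p) (snd p))"
    unfolding e by (simp add: sum.inter_filter)
  finally show ?thesis by (simp add: case_prod_beta)
qed

lemma cp_swap: "cubic_pair lam j i x = - cubic_pair lam i j x"
  by (simp add: cubic_pair_def algebra_simps)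

lemma Cf_pairs: "Cf d lam C x = (\<Sum>i\<le>d. \<Sum>j\<le>d. if i < j then (C i j - C j i) * cubic_pair lam i j x else 0)"
proof -
  have cz: "cubic_pair lam i i x = 0" for i by (simp add: cubic_pair_def power2_eq_square)
  have "Cf d lam C x = (\<Sum>i\<le>d. \<Sum>j\<le>d. (if i < j then C i j * cubic_pair lam i j x else 0) + (if j < i then C i j * cubic_pair lam i j x else 0))"
    unfolding Cf_def
    by (intro sum.cong refl) (auto simp: cz)
  also have "\<dots> = (\<Sum>i\<le>d. \<Sum>j\<le>d. if i < j then C i j * cubic_pair lam i j x else 0) + (\<Sum>i\<le>d. \<Sum>j\<le>d. if j < i then C i j * cubic_pair lam i j x else 0)"
    by (simp add: sum.distrib)
  also have "(\<Sum>i\<le>d. \<Sum>j\<le>d. if j < i then C i j * cubic_pair lam i j x else 0) = (\<Sum>i\<le>d. \<Sum>j\<le>d. if i < j then C j i * cubic_pair lam j i x else 0)"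
    by (rule sum.swap)
  also have "\<dots> = (\<Sum>i\<le>d. \<Sum>j\<le>d. if i < j then - (C j i * cubic_pair lam i j x) else 0)"
    by (intro sum.cong refl) (metis cp_swap mult_minus_right)
  finally show ?thesis by (simp add: sum.distrib[symmetric] algebra_simps if_distrib cong: if_cong)
qed

lemma Cf_span: "Cf d lam C \<in> cubic_span d lam"
  unfolding cubic_span_def
  by (rule CollectI, rule exI[of _ "\<lambda>i j. C i j - C j i"]) (simp add: pairs_sum Cf_pairs)

lemma cspan_repr: "r \<in> cubic_span d lam \<Longrightarrow> \<exists>C. (\<forall>i j. \<not> i < j \<longrightarrow> C i j = 0) \<and> (\<forall>x. r x = Cf d lam C x)"
proof -
  assume "r \<in> cubic_span d lam"
  then obtain c where c: "\<And>x. r x = (\<Sum>(i,j)\<in>pairs_lt d. c i j * cubic_pair lam i j x)"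
    unfolding cubic_span_def by blast
  show ?thesis
    by (rule exI[of _ "\<lambda>i j. if i < j then c i j else 0"]) (auto simp: c pairs_sum Cf_def intro!: sum.cong)
qed

locale bsetup =
  fixes a :: "nat \<Rightarrow> real^'n" and lam :: "nat \<Rightarrow> real^'n \<Rightarrow> real" and d :: nat
  assumes inj: "inj_on a {..d}"
    and nondeg: "\<not> affine_dependent (a ` {..d})"
    and bary: "\<forall>x. (\<Sum>i\<le>d. lam i x) = 1 \<and> (\<Sum>i\<le>d. lam i x *\<^sub>R a i) = x"
begin

lemma bary_uniq:
  assumes "(\<Sum>i\<le>d. mu i) = 1" "(\<Sum>i\<le>d. mu i *\<^sub>R a i) = x" "i \<le> d"
  shows "mu i = lam i x"
proof (rule ccontr)
  assume ne: "mu i \<noteq> lam i x"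
  define U where "U v = mu (inv_into {..d} a v) - lam (inv_into {..d} a v) x" for v
  have U: "U (a j) = mu j - lam j x" if "j \<le> d" for j
    using inv_into_f_f[OF inj] that by (simp add: U_def)
  have s1: "sum U (a ` {..d}) = 0"
    using bary assms(1) by (simp add: sum.reindex[OF inj] U sum_subtractf)
  have s2: "(\<Sum>v\<in>a ` {..d}. U v *\<^sub>R v) = 0"
    using bary assms(2) by (simp add: sum.reindex[OF inj] U scaleR_diff_left sum_subtractf)
  have "\<exists>v\<in>a ` {..d}. U v \<noteq> 0" using ne assms(3) U by force
  then have "affine_dependent (a ` {..d})"
    unfolding affine_dependent_explicit using s1 s2 by blast
  with nondeg show False by simp
qed

lemma lam_vertex: "i \<le> d \<Longrightarrow> k \<le> d \<Longrightarrow> lam i (a k) = (if i = k then 1 else 0)"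
proof (rule bary_uniq[symmetric])
  assume "k \<le> d"
  have e: "(if j = k then 1 else 0) *\<^sub>R a j = (if j = k then a k else 0)" for j by simp
  show "(\<Sum>j\<le>d. (if j = k then 1 else 0) *\<^sub>R a j) = a k"
    unfolding e using \<open>k \<le> d\<close> by simp
qed simp_all

lemma lam_add: "i \<le> d \<Longrightarrow> lam i (x + y) = lam i x + lam i y - lam i 0"
  apply (rule bary_uniq[symmetric])
  using bary by (auto simp: sum.distrib sum_subtractf scaleR_diff_left scaleR_add_left)

lemma lam_scale: "i \<le> d \<Longrightarrow> lam i (c *\<^sub>R x) = c * lam i x + (1 - c) * lam i 0"
proof (rule bary_uniq[symmetric])
  show "(\<Sum>i\<le>d. (c * lam i x + (1-c) * lam i 0) *\<^sub>R a i) = c *\<^sub>R x"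
  proof -
    have "(\<Sum>i\<le>d. (c * lam i x + (1-c) * lam i 0) *\<^sub>R a i) = c *\<^sub>R (\<Sum>i\<le>d. lam i x *\<^sub>R a i) + (1-c) *\<^sub>R (\<Sum>i\<le>d. lam i 0 *\<^sub>R a i)"
      by (simp add: scaleR_add_left sum.distrib scaleR_sum_right)
    then show ?thesis using bary by simp
  qed
  show "(\<Sum>i\<le>d. c * lam i x + (1-c) * lam i 0) = 1"
  proof -
    have "(\<Sum>i\<le>d. c * lam i x + (1-c) * lam i 0) = c * (\<Sum>i\<le>d. lam i x) + (1-c) * (\<Sum>i\<le>d. lam i 0)"
      by (simp add: sum.distrib sum_distrib_left)
    then show ?thesis using bary by simp
  qed
qed

lemma lam_linear: "i \<le> d \<Longrightarrow> linear (\<lambda>v. lam i v - lam i 0)"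
  apply (rule linearI)
  by (simp_all add: lam_add lam_scale algebra_simps)

lemma lam_deriv: "i \<le> d \<Longrightarrow> (lam i has_derivative (\<lambda>v. lam i v - lam i 0)) (at x)"
proof -
  assume i: "i \<le> d"
  have bl: "bounded_linear (\<lambda>v. lam i v - lam i 0)"
    using lam_linear[OF i] linear_conv_bounded_linear by blast
  have "((\<lambda>v. (lam i v - lam i 0) + lam i 0) has_derivative (\<lambda>v. lam i v - lam i 0)) (at x)"
    by (intro has_derivative_add_const bounded_linear.has_derivative[OF bl] has_derivative_ident)
  then show ?thesis by simp
qed

lemma lam_diff_vertex: "i \<le> d \<Longrightarrow> k \<le> d \<Longrightarrow> l \<le> d \<Longrightarrow>
   lam i (a l - a k) - lam i 0 = (if i = l then 1 else 0) - (if i = k then 1 else 0)"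
  using lam_add[of i "a l - a k" "a k"] lam_vertex by simp

lemma lam_affine: "i \<le> d \<Longrightarrow> lam i x = lam i 0 + (\<Sum>k\<in>UNIV. (lam i (axis k 1) - lam i 0) * x$k)"
proof -
  assume i: "i \<le> d"
  have "lam i x - lam i 0 = lam i (\<Sum>k\<in>UNIV. x$k *\<^sub>R axis k 1) - lam i 0"
    using basis_expansion[of x] by (simp add: scalar_mult_eq_scaleR)
  also have "\<dots> = (\<Sum>k\<in>UNIV. lam i (x$k *\<^sub>R axis k 1) - lam i 0)"
    using linear_sum[OF lam_linear[OF i]] by (simp add: o_def)
  also have "\<dots> = (\<Sum>k\<in>UNIV. x$k * (lam i (axis k 1) - lam i 0))"
    using linear_scale[OF lam_linear[OF i]] by simp
  finally show ?thesis by (simp add: mult.commute)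
qed

lemma coord: "x$k = (\<Sum>i\<le>d. lam i x * a i $ k)"
proof -
  have "x$k = (\<Sum>i\<le>d. lam i x *\<^sub>R a i) $ k" using bary by simp
  then show ?thesis by simp
qed


definition "L i v = lam i v - lam i 0"

lemma lam_deriv': "i \<in> {..d} \<Longrightarrow> (lam i has_derivative L i) (at x)"
  using lam_deriv[of i x] by (simp add: L_def[abs_def])

lemma Fq_deriv: "(Fq d lam B C has_derivative (\<lambda>v. (\<Sum>i\<le>d. \<Sum>l\<le>d. B i l * (L i v * lam l x + lam i x * L l v))
   + (\<Sum>i\<le>d. \<Sum>j\<le>d. C i j * (2 * lam i x * L i v * lam j x + lam i x ^ 2 * L j v
        - (L i v * lam j x ^ 2 + lam i x * (2 * lam j x * L j v)))))) (at x)"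
  unfolding Fq_def[abs_def] Qf_def Cf_def cubic_pair_def
  apply (rule has_derivative_eq)
   apply (rule lam_deriv' derivative_intros | assumption)+
  apply (simp_all add: algebra_simps power2_eq_square)
  done

lemma dd_vertex:
  assumes k: "k \<le> d" and l: "l \<le> d" and kl: "k \<noteq> l"
  shows "dirderiv (Fq d lam B C) (a k) (a l - a k) = B k l + B l k - 2 * B k k + C k l - C l k"
proof -
  have lv: "lam i (a k) = (if i = k then 1 else 0)" if "i \<le> d" for i using lam_vertex that k by simp
  have Lv: "L i (a l - a k) = (if i = l then 1 else 0) - (if i = k then 1 else 0)" if "i \<le> d" for i
    using lam_diff_vertex that k l by (simp add: L_def)
  have split3: "sum f {..d} = f k + f l + sum f ({..d} - {k,l})" for f :: "nat \<Rightarrow> real"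
  proof -
    have "sum f {..d} = sum f {k,l} + sum f ({..d} - {k,l})"
      using k l by (subst sum.subset_diff[of "{k,l}"]) auto
    then show ?thesis using kl by simp
  qed
  show ?thesis
    unfolding dirderiv_def frechet_derivative_at[OF Fq_deriv, symmetric]
    using k l kl
    apply (simp add: lv Lv)
    apply (simp only: split3 cong: sum.cong_simp)
    apply (simp cong: sum.cong_simp)
    done
qed

end


context bsetup begin
lemma Fq_val:
  assumes k: "k \<le> d"
  shows "Fq d lam B C (a k) = B k k"
proof -
  have lv: "lam i (a k) = (if i = k then 1 else 0)" if "i \<le> d" for i using lam_vertex that k by simp
  have split1: "sum f {..d} = f k + sum f ({..d} - {k})" for f :: "nat \<Rightarrow> real"
    using k by (subst sum.remove[of _ k]) auto
  show ?thesis
    unfolding Fq_def Qf_def Cf_def cubic_pair_def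
    apply (simp add: lv cong: sum.cong_simp)
    apply (simp only: split1 cong: sum.cong_simp)
    apply (simp cong: sum.cong_simp)
    done
qed

lemma Fq_zero:
  assumes diag: "\<forall>k\<le>d. B k k = 0"
    and off: "\<forall>k\<le>d. \<forall>l\<le>d. k \<noteq> l \<longrightarrow> B k l + B l k + C k l - C l k = 0"
  shows "Fq d lam B C x = 0"
proof -
  have anti: "B l i = - B i l" if "i \<le> d" "l \<le> d" for i l
  proof (cases "i = l")
    case True then show ?thesis using diag that by simp
  next
    case False
    then have "B i l + B l i + C i l - C l i = 0" "B l i + B i l + C l i - C i l = 0"
      using off that by auto
    then show ?thesis by simp
  qed
  have sym: "C l i = C i l" if "i \<le> d" "l \<le> d" for i l
  proof (cases "i = l")
    case True then show ?thesis by simp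
  next
    case False
    then have "B i l + B l i + C i l - C l i = 0" "B l i + B i l + C l i - C i l = 0"
      using off that by auto
    then show ?thesis by simp
  qed
  have q: "Qf d lam B x = 0"
  proof -
    have "Qf d lam B x = (\<Sum>i\<le>d. \<Sum>l\<le>d. B l i * lam l x * lam i x)"
      unfolding Qf_def by (rule sum.swap)
    also have "\<dots> = (\<Sum>i\<le>d. \<Sum>l\<le>d. - (B i l * lam i x * lam l x))"
    proof (intro sum.cong refl)
      fix i l assume "i \<in> {..d}" "l \<in> {..d}"
      then have "B l i = - B i l" using anti[of i l] by simp
      then show "B l i * lam l x * lam i x = - (B i l * lam i x * lam l x)" by simp
    qed
    also have "\<dots> = - Qf d lam B x" unfolding Qf_def by (simp add: sum_negf)
    finally show ?thesis by simp
  qed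
  have c: "Cf d lam C x = 0"
  proof -
    have "Cf d lam C x = (\<Sum>i\<le>d. \<Sum>l\<le>d. C l i * cubic_pair lam l i x)"
      unfolding Cf_def by (rule sum.swap)
    also have "\<dots> = (\<Sum>i\<le>d. \<Sum>l\<le>d. - (C i l * cubic_pair lam i l x))"
    proof (intro sum.cong refl)
      fix i l assume "i \<in> {..d}" "l \<in> {..d}"
      then have "C l i = C i l" using sym[of i l] by simp
      then show "C l i * cubic_pair lam l i x = - (C i l * cubic_pair lam i l x)" by (simp add: cp_swap[of lam l i])
    qed
    also have "\<dots> = - Cf d lam C x" unfolding Cf_def by (simp add: sum_negf)
    finally show ?thesis by simp
  qed
  show ?thesis using q c by (simp add: Fq_def)
qed

lemma Qf_P2: "Qf d lam B \<in> P2"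
proof -
  have "(\<lambda>x. \<Sum>i\<le>d. \<Sum>l\<le>d. B i l * (lam i x * lam l x)) \<in> P2"
  proof (intro P2_sum P2_scale finite_atMost)
    fix i l assume "i \<in> {..d}" "l \<in> {..d}"
    then have il: "i \<le> d" "l \<le> d" by auto
    show "(\<lambda>x. lam i x * lam l x) \<in> P2"
      by (rule P2_prod; rule lam_affine; simp add: il)
  qed
  then show ?thesis unfolding Qf_def[abs_def] by (simp add: mult.assoc)
qed

lemma Fq_Z: "Fq d lam B C \<in> Zspace d lam"
  unfolding Zspace_def
  by (rule CollectI, rule bexI[OF bexI[OF _ Cf_span[of d lam C]] Qf_P2[of B]]) (simp add: Fq_def)

lemma P2_repr: "q \<in> P2 \<Longrightarrow> \<exists>B. \<forall>x. q x = Qf d lam B x"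
proof -
  assume "q \<in> P2"
  then obtain c b A where
    q: "\<And>x. q x = c + (\<Sum>k\<in>UNIV. b k * x$k) + (\<Sum>k\<in>UNIV. \<Sum>m\<in>UNIV. A k m * x$k * x$m)"
    unfolding P2_def by blast
  define B where "B i l = c + (\<Sum>k\<in>UNIV. b k * a i $ k) + (\<Sum>k\<in>UNIV. \<Sum>m\<in>UNIV. A k m * a i $ k * a l $ m)" for i l
  have "q x = Qf d lam B x" for x
  proof -
    let ?l = "\<lambda>i. lam i x"
    have s1: "(\<Sum>i\<le>d. ?l i) = 1" using bary by simp
    have t1: "(\<Sum>i\<le>d. \<Sum>l\<le>d. c * ?l i * ?l l) = c"
    proof -
      have "(\<Sum>i\<le>d. \<Sum>l\<le>d. c * ?l i * ?l l) = c * ((\<Sum>i\<le>d. ?l i) * (\<Sum>l\<le>d. ?l l))"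
        by (simp only: sum_product, simp only: sum_distrib_left mult.assoc)
      then show ?thesis using s1 by simp
    qed
    have t2: "(\<Sum>i\<le>d. \<Sum>l\<le>d. (\<Sum>k\<in>UNIV. b k * a i $ k) * ?l i * ?l l) = (\<Sum>k\<in>UNIV. b k * x$k)"
    proof -
      have "(\<Sum>i\<le>d. \<Sum>l\<le>d. (\<Sum>k\<in>UNIV. b k * a i $ k) * ?l i * ?l l) = (\<Sum>i\<le>d. (\<Sum>k\<in>UNIV. b k * a i $ k) * ?l i * (\<Sum>l\<le>d. ?l l))"
        by (simp add: sum_distrib_left)
      also have "\<dots> = (\<Sum>i\<le>d. \<Sum>k\<in>UNIV. b k * a i $ k * ?l i)"
        using s1 by (simp add: sum_distrib_right)
      also have "\<dots> = (\<Sum>k\<in>UNIV. \<Sum>i\<le>d. b k * (?l i * a i $ k))"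
        by (subst sum.swap) (simp add: algebra_simps)
      also have "\<dots> = (\<Sum>k\<in>UNIV. b k * x$k)"
        by (simp add: sum_distrib_left[symmetric] coord[symmetric])
      finally show ?thesis .
    qed
    have t3: "(\<Sum>i\<le>d. \<Sum>l\<le>d. (\<Sum>k\<in>UNIV. \<Sum>m\<in>UNIV. A k m * a i $ k * a l $ m) * ?l i * ?l l)
       = (\<Sum>k\<in>UNIV. \<Sum>m\<in>UNIV. A k m * x$k * x$m)"
    proof -
      have "(\<Sum>k\<in>UNIV. \<Sum>m\<in>UNIV. A k m * x$k * x$m)
          = (\<Sum>k\<in>UNIV. \<Sum>m\<in>UNIV. A k m * (\<Sum>i\<le>d. ?l i * a i $ k) * (\<Sum>l\<le>d. ?l l * a l $ m))"
        by (simp add: coord[symmetric])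
      also have "\<dots> = (\<Sum>k\<in>UNIV. \<Sum>m\<in>UNIV. \<Sum>i\<le>d. \<Sum>l\<le>d. A k m * a i $ k * a l $ m * ?l i * ?l l)"
      proof (intro sum.cong refl)
        fix k m
        have "A k m * (\<Sum>i\<le>d. ?l i * a i $ k) * (\<Sum>l\<le>d. ?l l * a l $ m) = A k m * ((\<Sum>i\<le>d. ?l i * a i $ k) * (\<Sum>l\<le>d. ?l l * a l $ m))"
          by (simp only: mult.assoc)
        also have "\<dots> = A k m * (\<Sum>i\<le>d. \<Sum>l\<le>d. (?l i * a i $ k) * (?l l * a l $ m))"
          by (simp only: sum_product)
        also have "\<dots> = (\<Sum>i\<le>d. \<Sum>l\<le>d. A k m * ((?l i * a i $ k) * (?l l * a l $ m)))"
          by (simp only: sum_distrib_left)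
        also have "\<dots> = (\<Sum>i\<le>d. \<Sum>l\<le>d. A k m * a i $ k * a l $ m * ?l i * ?l l)"
          by (intro sum.cong refl) (simp only: ac_simps)
        finally show "A k m * (\<Sum>i\<le>d. ?l i * a i $ k) * (\<Sum>l\<le>d. ?l l * a l $ m) = (\<Sum>i\<le>d. \<Sum>l\<le>d. A k m * a i $ k * a l $ m * ?l i * ?l l)" .
      qed
      also have "\<dots> = (\<Sum>k\<in>UNIV. \<Sum>i\<le>d. \<Sum>m\<in>UNIV. \<Sum>l\<le>d. A k m * a i $ k * a l $ m * ?l i * ?l l)"
        by (intro sum.cong refl sum.swap)
      also have "\<dots> = (\<Sum>i\<le>d. \<Sum>k\<in>UNIV. \<Sum>m\<in>UNIV. \<Sum>l\<le>d. A k m * a i $ k * a l $ m * ?l i * ?l l)"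
        by (rule sum.swap)
      also have "\<dots> = (\<Sum>i\<le>d. \<Sum>k\<in>UNIV. \<Sum>l\<le>d. \<Sum>m\<in>UNIV. A k m * a i $ k * a l $ m * ?l i * ?l l)"
        by (intro sum.cong refl sum.swap)
      also have "\<dots> = (\<Sum>i\<le>d. \<Sum>l\<le>d. \<Sum>k\<in>UNIV. \<Sum>m\<in>UNIV. A k m * a i $ k * a l $ m * ?l i * ?l l)"
        by (intro sum.cong refl sum.swap)
      also have "\<dots> = (\<Sum>i\<le>d. \<Sum>l\<le>d. (\<Sum>k\<in>UNIV. \<Sum>m\<in>UNIV. A k m * a i $ k * a l $ m) * ?l i * ?l l)"
        by (simp add: sum_distrib_right)
      finally show ?thesis by simp
    qed
    have "Qf d lam B x = (\<Sum>i\<le>d. \<Sum>l\<le>d. c * ?l i * ?l l)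
       + (\<Sum>i\<le>d. \<Sum>l\<le>d. (\<Sum>k\<in>UNIV. b k * a i $ k) * ?l i * ?l l)
       + (\<Sum>i\<le>d. \<Sum>l\<le>d. (\<Sum>k\<in>UNIV. \<Sum>m\<in>UNIV. A k m * a i $ k * a l $ m) * ?l i * ?l l)"
      unfolding Qf_def B_def by (simp only: distrib_right sum.distrib)
    then show ?thesis using t1 t2 t3 q by simp
  qed
  then show ?thesis by blast
qed

lemma Z_repr: "p \<in> Zspace d lam \<Longrightarrow> \<exists>B C. p = Fq d lam B C"
proof -
  assume "p \<in> Zspace d lam"
  then obtain q r where "q \<in> P2" "r \<in> cubic_span d lam" and p: "\<And>x. p x = q x + r x"
    unfolding Zspace_def by blast
  then obtain B C where "\<And>x. q x = Qf d lam B x" "\<And>x. r x = Cf d lam C x"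
    using P2_repr cspan_repr by metis
  then have "p = Fq d lam B C" using p by (auto simp: Fq_def)
  then show ?thesis by blast
qed

end



lemma sum_single: "(i::nat) \<le> d \<Longrightarrow> (\<And>k. k \<le> d \<Longrightarrow> k \<noteq> i \<Longrightarrow> f k = 0) \<Longrightarrow> (\<Sum>k\<le>d. f k) = f i"
  by (subst sum.remove[of _ i]) auto

theorem mainTheorem1:
  fixes a :: "nat \<Rightarrow> real^'n"
    and lam :: "nat \<Rightarrow> real^'n \<Rightarrow> real"
  assumes dim: "CARD('n) \<ge> 2"
    and inj: "inj_on a {..CARD('n)}"
    and nondeg: "\<not> affine_dependent (a ` {..CARD('n)})"
    and bary: "\<forall>x. (\<Sum>i\<le>CARD('n). lam i x) = 1 \<and> (\<Sum>i\<le>CARD('n). lam i x *\<^sub>R a i) = x"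
  shows
    "(\<forall>r\<in>cubic_span CARD('n) lam. r \<in> P2 \<longrightarrow> (\<forall>x. r x = 0))
     \<and> (\<forall>(f::nat \<Rightarrow> real) (g::nat \<Rightarrow> nat \<Rightarrow> real). \<exists>!p. p \<in> Zspace CARD('n) lam
          \<and> (\<forall>i\<le>CARD('n). p (a i) = f i)
          \<and> (\<forall>i\<le>CARD('n). \<forall>j\<le>CARD('n). j \<noteq> i \<longrightarrow> dirderiv p (a i) (a j - a i) = g i j))
     \<and> (\<forall>i\<le>CARD('n).
          let phi = (\<lambda>x. lam i x + (\<Sum>j\<in>{..CARD('n)} - {i}. cubic_pair lam i j x)) in
          phi \<in> Zspace CARD('n) lam
          \<and> (\<forall>k\<le>CARD('n). phi (a k) = (if i = k then 1 else 0))
          \<and> (\<forall>k\<le>CARD('n). \<forall>l\<le>CARD('n). k \<noteq> l \<longrightarrow> dirderiv phi (a k) (a l - a k) = 0))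
     \<and> (\<forall>i\<le>CARD('n). \<forall>j\<le>CARD('n). i \<noteq> j \<longrightarrow>
          (let phi = (\<lambda>x. (1/2) * (lam i x * lam j x + cubic_pair lam i j x)) in
          phi \<in> Zspace CARD('n) lam
          \<and> (\<forall>k\<le>CARD('n). phi (a k) = 0)
          \<and> (\<forall>k\<le>CARD('n). \<forall>l\<le>CARD('n). k \<noteq> l \<longrightarrow>
               dirderiv phi (a k) (a l - a k) = (if i = k \<and> j = l then 1 else 0))))"
proof -
  interpret bsetup a lam "CARD('n)" using inj nondeg bary by unfold_locales
  let ?d = "CARD('n)"
  have P1: "\<forall>r\<in>cubic_span ?d lam. r \<in> P2 \<longrightarrow> (\<forall>x. r x = 0)"
  proof (intro ballI impI allI)
    fix r x assume r: "r \<in> cubic_span ?d lam" and rP: "r \<in> P2"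
    obtain C where rC: "\<forall>x. r x = Cf ?d lam C x" using cspan_repr[OF r] by blast
    obtain B where rB: "\<forall>x. r x = Qf ?d lam B x" using P2_repr[OF rP] by blast
    let ?G = "Fq ?d lam (\<lambda>i j. B i j - 0) (\<lambda>i j. 0 - C i j)"
    have G0: "?G = (\<lambda>x. 0)"
    proof
      fix y
      show "?G y = 0" unfolding Fq_diff using rB rC by (simp add: Fq_def Qf_def Cf_def)
    qed
    have dz: "dirderiv ?G y v = 0" for y v
      unfolding G0 dirderiv_def using frechet_derivative_at[OF has_derivative_const[of 0 "at y"]] by simp
    have Bkk: "B k k = 0" if "k \<le> ?d" for k
      using Fq_val[OF that, of "\<lambda>i j. B i j - 0" "\<lambda>i j. 0 - C i j"] G0 by simp
    have sym: "C k l - C l k = 0" if "k \<le> ?d" "l \<le> ?d" "k \<noteq> l" for k l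
      using dd_vertex[OF that, of "\<lambda>i j. B i j - 0" "\<lambda>i j. 0 - C i j"]
        dd_vertex[of l k "\<lambda>i j. B i j - 0" "\<lambda>i j. 0 - C i j"] that dz Bkk[of k] Bkk[of l] by simp
    have "Fq ?d lam (\<lambda>i j. 0) C x = 0"
      by (rule Fq_zero) (use sym in auto)
    then show "r x = 0" using rC by (simp add: Fq_def Qf_def)
  qed
  have P2: "\<exists>!p. p \<in> Zspace ?d lam
          \<and> (\<forall>i\<le>?d. p (a i) = f i)
          \<and> (\<forall>i\<le>?d. \<forall>j\<le>?d. j \<noteq> i \<longrightarrow> dirderiv p (a i) (a j - a i) = g i j)" for f g
  proof -
    define B where "B k l = (if k = l then f k else (g k l + g l k) / 4 + (f k + f l) / 2)" for k l
    define C where "C k l = ((g k l - g l k) / 2 + f k - f l) / 2" for k l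
    have val: "Fq ?d lam B C (a i) = f i" if "i \<le> ?d" for i
      using Fq_val[OF that] by (simp add: B_def)
    have der: "dirderiv (Fq ?d lam B C) (a i) (a j - a i) = g i j" if "i \<le> ?d" "j \<le> ?d" "j \<noteq> i" for i j
      using dd_vertex[of i j B C] that by (simp add: B_def C_def field_simps)
    show ?thesis
    proof (rule ex1I[of _ "Fq ?d lam B C"])
      show "Fq ?d lam B C \<in> Zspace ?d lam \<and> (\<forall>i\<le>?d. Fq ?d lam B C (a i) = f i)
          \<and> (\<forall>i\<le>?d. \<forall>j\<le>?d. j \<noteq> i \<longrightarrow> dirderiv (Fq ?d lam B C) (a i) (a j - a i) = g i j)"
        using Fq_Z val der by blast
    next
      fix p assume p: "p \<in> Zspace ?d lam
          \<and> (\<forall>i\<le>?d. p (a i) = f i)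
          \<and> (\<forall>i\<le>?d. \<forall>j\<le>?d. j \<noteq> i \<longrightarrow> dirderiv p (a i) (a j - a i) = g i j)"
      then obtain B' C' where pe: "p = Fq ?d lam B' C'" using Z_repr by blast
      have v': "B' i i = f i" if "i \<le> ?d" for i using p Fq_val[OF that, of B' C'] that pe by simp
      have d': "B' i j + B' j i - 2 * B' i i + C' i j - C' j i = g i j" if "i \<le> ?d" "j \<le> ?d" "j \<noteq> i" for i j
        using p dd_vertex[of i j B' C'] that pe by simp
      have dd: "B i j + B j i - 2 * B i i + C i j - C j i = g i j" if "i \<le> ?d" "j \<le> ?d" "j \<noteq> i" for i j
        using der[OF that] dd_vertex[of i j B C] that by simp
      have vv: "B i i = f i" for i by (simp add: B_def)
      show "p = Fq ?d lam B C"
      proof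
        fix x
        have "Fq ?d lam (\<lambda>i j. B' i j - B i j) (\<lambda>i j. C' i j - C i j) x = 0"
        proof (rule Fq_zero)
          show "\<forall>k\<le>?d. B' k k - B k k = 0" using v' vv by simp
          show "\<forall>k\<le>?d. \<forall>l\<le>?d. k \<noteq> l \<longrightarrow> B' k l - B k l + (B' l k - B l k) + (C' k l - C k l) - (C' l k - C l k) = 0"
          proof (intro allI impI)
            fix k l assume "k \<le> ?d" "l \<le> ?d" "k \<noteq> l"
            then show "B' k l - B k l + (B' l k - B l k) + (C' k l - C k l) - (C' l k - C l k) = 0"
              using d'[of k l] dd[of k l] v'[of k] vv[of k] by simp
          qed
        qed
        then show "p x = Fq ?d lam B C x" unfolding Fq_diff pe by simp
      qed
    qed
  qed
  have P3: "let phi = (\<lambda>x. lam i x + (\<Sum>j\<in>{..?d} - {i}. cubic_pair lam i j x)) in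
          phi \<in> Zspace ?d lam
          \<and> (\<forall>k\<le>?d. phi (a k) = (if i = k then 1 else 0))
          \<and> (\<forall>k\<le>?d. \<forall>l\<le>?d. k \<noteq> l \<longrightarrow> dirderiv phi (a k) (a l - a k) = 0)" if i: "i \<le> ?d" for i
  proof -
    define B :: "nat \<Rightarrow> nat \<Rightarrow> real" where "B k l = (if k = i then 1 else 0)" for k l
    define C where "C k l = (if k = i \<and> l \<noteq> i then 1 else (0::real))" for k l
    have e: "(\<lambda>x. lam i x + (\<Sum>j\<in>{..?d} - {i}. cubic_pair lam i j x)) = Fq ?d lam B C"
    proof
      fix x
      have q: "Qf ?d lam B x = lam i x"
      proof -
        have "Qf ?d lam B x = (\<Sum>k\<le>?d. if k = i then (\<Sum>l\<le>?d. lam i x * lam l x) else 0)"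
          unfolding Qf_def B_def by (intro sum.cong refl) auto
        also have "\<dots> = (\<Sum>l\<le>?d. lam i x * lam l x)" using i by simp
        also have "\<dots> = lam i x" using bary by (simp add: sum_distrib_left[symmetric])
        finally show ?thesis .
      qed
      have c: "Cf ?d lam C x = (\<Sum>j\<in>{..?d} - {i}. cubic_pair lam i j x)"
      proof -
        have "Cf ?d lam C x = (\<Sum>k\<le>?d. if k = i then (\<Sum>j\<le>?d. if j \<noteq> i then cubic_pair lam i j x else 0) else 0)"
          unfolding Cf_def C_def by (intro sum.cong refl) (auto intro!: sum.cong)
        also have "\<dots> = (\<Sum>j\<le>?d. if j \<noteq> i then cubic_pair lam i j x else 0)" using i by simp
        also have "\<dots> = (\<Sum>j\<in>{..?d} - {i}. cubic_pair lam i j x)"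
          by (simp add: sum.If_cases Diff_eq Compl_eq)
        finally show ?thesis .
      qed
      show "lam i x + (\<Sum>j\<in>{..?d} - {i}. cubic_pair lam i j x) = Fq ?d lam B C x"
        using q c by (simp add: Fq_def)
    qed
    show ?thesis unfolding Let_def e
      using Fq_Z Fq_val dd_vertex by (auto simp: B_def C_def)
  qed
  have P4: "let phi = (\<lambda>x. (1/2) * (lam i x * lam j x + cubic_pair lam i j x)) in
          phi \<in> Zspace ?d lam
          \<and> (\<forall>k\<le>?d. phi (a k) = 0)
          \<and> (\<forall>k\<le>?d. \<forall>l\<le>?d. k \<noteq> l \<longrightarrow>
               dirderiv phi (a k) (a l - a k) = (if i = k \<and> j = l then 1 else 0))"
    if i: "i \<le> ?d" and j: "j \<le> ?d" and ij: "i \<noteq> j" for i j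
  proof -
    define B where "B k l = (if k = i \<and> l = j then 1/2 else (0::real))" for k l
    have e: "(\<lambda>x. (1/2) * (lam i x * lam j x + cubic_pair lam i j x)) = Fq ?d lam B B"
    proof
      fix x
      have "Qf ?d lam B x = (\<Sum>l\<le>?d. B i l * lam i x * lam l x)"
        unfolding Qf_def by (rule sum_single[OF i]) (auto simp: B_def)
      also have "\<dots> = B i j * lam i x * lam j x"
        by (rule sum_single[OF j]) (auto simp: B_def)
      finally have q: "Qf ?d lam B x = (1/2) * (lam i x * lam j x)" by (simp add: B_def)
      have "Cf ?d lam B x = (\<Sum>l\<le>?d. B i l * cubic_pair lam i l x)"
        unfolding Cf_def by (rule sum_single[OF i]) (auto simp: B_def)
      also have "\<dots> = B i j * cubic_pair lam i j x"
        by (rule sum_single[OF j]) (auto simp: B_def)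
      finally have c: "Cf ?d lam B x = (1/2) * cubic_pair lam i j x" by (simp add: B_def)
      show "(1/2) * (lam i x * lam j x + cubic_pair lam i j x) = Fq ?d lam B B x"
        using q c by (simp add: Fq_def algebra_simps)
    qed
    show ?thesis unfolding Let_def e
      using Fq_Z Fq_val dd_vertex ij by (auto simp: B_def)
  qed
  show ?thesis using P1 P2 P3 P4 by blast
qed

end
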